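(* Let $\mathbf{k}$ be a perfect field and $L/\mathbf{k}$ a quadratic extension. (1) Let $p\in\mathcal{Q}^L$ be a point of degree $2$ whose geometric components are not on the same ruling of $\mathcal{Q}^L_{\overline{\mathbf{k}}}\simeq\mathbb{P}^1_{\overline{\mathbf{k}}}\times\mathbb{P}^1_{\overline{\mathbf{k}}}$ and whose splitting field is $L$. Then there exists $\alpha\in\operatorname{Aut}_{\mathbf{k}}(\mathcal{Q}^L)$ such that $\alpha(p)=\{([1:0],[0:1]),([0:1],[1:0])\}$. (2) Let $r,s\in\mathcal{Q}^L(\mathbf{k})$ be two rational points not contained in the same ruling of $\mathcal{Q}^L_{\overline{\mathbf{k}}}$. Then there exists $\alpha\in\operatorname{Aut}_{\mathbf{k}}(\mathcal{Q}^L)$ such that $\alpha(r)=([1:0],[1:0])$ and $\alpha(s)=([0:1],[0:1])$.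
   Context: With $g$ the generator of $\operatorname{Gal}(L/\mathbf{k})$, $\mathcal{Q}^L$ is the $\mathbf{k}$-structure on $\mathbb{P}^1_L\times\mathbb{P}^1_L$ given by the Galois action $([u_0:u_1],[v_0:v_1])\mapsto([v_0^g:v_1^g],[u_0^g:u_1^g])$; points are written in the coordinates of $\mathbb{P}^1_L\times\mathbb{P}^1_L$. A point of degree $d$ is a Galois orbit of cardinality $d$ of $\overline{\mathbf{k}}$-points, its geometric components being the points of the orbit; its splitting field is the smallest normal extension over which all of them are defined. "Two points are on the same ruling" means they lie on a common fibre of one of the two projections of $\mathbb{P}^1\times\mathbb{P}^1$. *)

theory Defs
  imports "HOL-Computational_Algebra.Polynomial"
begin

text \<open>The type 'a plays the role of an algebraic closure of the base field k,
  which is a subfield (carrier set) of 'a. A point of the projective line over 'a is represented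
  by the punctured line {c u | c nonzero} of a nonzero vector u; [u0:u1] is proj_pt (u0,u1).\<close>

definition is_subfield :: "'a::field set \<Rightarrow> bool" where
  "is_subfield F \<longleftrightarrow> 0 \<in> F \<and> 1 \<in> F \<and>
     (\<forall>x\<in>F. \<forall>y\<in>F. x + y \<in> F \<and> x * y \<in> F) \<and>
     (\<forall>x\<in>F. - x \<in> F \<and> inverse x \<in> F)"

definition alg_closed_field :: "'a::field itself \<Rightarrow> bool" where
  "alg_closed_field _ \<longleftrightarrow> (\<forall>p :: 'a poly. degree p > 0 \<longrightarrow> (\<exists>x. poly p x = 0))"

definition algebraic_over :: "'a::field set \<Rightarrow> bool" where
  "algebraic_over k \<longleftrightarrow> (\<forall>x::'a. \<exists>p. p \<noteq> 0 \<and> (\<forall>i. coeff p i \<in> k) \<and> poly p x = 0)"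

definition perfect_subfield :: "'a::field set \<Rightarrow> bool" where
  "perfect_subfield k \<longleftrightarrow> CHAR('a) = 0 \<or> (\<forall>x\<in>k. \<exists>y\<in>k. y ^ CHAR('a) = x)"

definition quadratic_ext :: "'a::field set \<Rightarrow> 'a set \<Rightarrow> bool" where
  "quadratic_ext k L \<longleftrightarrow> is_subfield L \<and> k \<subseteq> L \<and>
     (\<exists>b1\<in>L. \<exists>b2\<in>L. \<forall>x\<in>L. \<exists>!c. c \<in> k \<times> k \<and> x = fst c * b1 + snd c * b2)"

definition Gal :: "'a::field set \<Rightarrow> ('a \<Rightarrow> 'a) set" where
  "Gal F = {\<sigma>. bij \<sigma> \<and> (\<forall>a b. \<sigma> (a + b) = \<sigma> a + \<sigma> b \<and> \<sigma> (a * b) = \<sigma> a * \<sigma> b) \<and>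
               (\<forall>a\<in>F. \<sigma> a = a)}"

definition proj_pt :: "'a::field \<times> 'a \<Rightarrow> ('a \<times> 'a) set" where
  "proj_pt u = {(c * fst u, c * snd u) | c. c \<noteq> 0}"

definition P1 :: "('a::field \<times> 'a) set set" where
  "P1 = {proj_pt u | u. u \<noteq> (0, 0)}"

definition QP :: "(('a::field \<times> 'a) set \<times> ('a \<times> 'a) set) set" where
  "QP = P1 \<times> P1"

definition conj_pt :: "('a \<Rightarrow> 'a) \<Rightarrow> ('a \<times> 'a) set \<Rightarrow> ('a \<times> 'a) set" where
  "conj_pt \<sigma> x = (\<lambda>(a, b). (\<sigma> a, \<sigma> b)) ` x"

text \<open>The Galois action of \<sigma> in Gal(kbar/k) on geometric points of Q^L: if \<sigma> restricts to the
  generator g of Gal(L/k), coordinates are conjugated and the factors swapped; if \<sigma> is trivial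
  on L, coordinates are just conjugated.\<close>
definition tw_act :: "'a::field set \<Rightarrow> ('a \<Rightarrow> 'a) \<Rightarrow> ('a \<times> 'a) set \<times> ('a \<times> 'a) set
     \<Rightarrow> ('a \<times> 'a) set \<times> ('a \<times> 'a) set" where
  "tw_act L \<sigma> z = (if (\<forall>a\<in>L. \<sigma> a = a) then (conj_pt \<sigma> (fst z), conj_pt \<sigma> (snd z))
                     else (conj_pt \<sigma> (snd z), conj_pt \<sigma> (fst z)))"

definition rational_point :: "'a::field set \<Rightarrow> 'a set \<Rightarrow> _ \<Rightarrow> bool" where
  "rational_point k L z \<longleftrightarrow> z \<in> QP \<and> (\<forall>\<sigma>\<in>Gal k. tw_act L \<sigma> z = z)"

text \<open>A closed point of degree d: a Galois orbit of geometric points of cardinality d.\<close>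
definition closed_point_deg :: "'a::field set \<Rightarrow> 'a set \<Rightarrow> _ set \<Rightarrow> nat \<Rightarrow> bool" where
  "closed_point_deg k L p d \<longleftrightarrow>
     (\<exists>z\<in>QP. p = {tw_act L \<sigma> z | \<sigma>. \<sigma> \<in> Gal k}) \<and> card p = d"

definition normal_intermediate :: "'a::field set \<Rightarrow> 'a set \<Rightarrow> bool" where
  "normal_intermediate k F \<longleftrightarrow> is_subfield F \<and> k \<subseteq> F \<and> (\<forall>\<sigma>\<in>Gal k. \<sigma> ` F = F)"

definition defined_over :: "'a::field set \<Rightarrow> 'a set \<Rightarrow> _ \<Rightarrow> bool" where
  "defined_over L F z \<longleftrightarrow> (\<forall>\<sigma>\<in>Gal F. tw_act L \<sigma> z = z)"

definition splitting_field :: "'a::field set \<Rightarrow> 'a set \<Rightarrow> _ set \<Rightarrow> 'a set \<Rightarrow> bool" where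
  "splitting_field k L p F \<longleftrightarrow> normal_intermediate k F \<and> (\<forall>z\<in>p. defined_over L F z) \<and>
     (\<forall>F'. normal_intermediate k F' \<and> (\<forall>z\<in>p. defined_over L F' z) \<longrightarrow> F \<subseteq> F')"

definition same_ruling :: "_ \<times> _ \<Rightarrow> _ \<times> _ \<Rightarrow> bool" where
  "same_ruling z w \<longleftrightarrow> fst z = fst w \<or> snd z = snd w"

text \<open>Action of an invertible 2x2 matrix (a b; c d) on P1.\<close>
definition mat_act :: "'a::field \<times> 'a \<times> 'a \<times> 'a \<Rightarrow> ('a \<times> 'a) set \<Rightarrow> ('a \<times> 'a) set" where
  "mat_act M x = (case M of (a, b, c, d) \<Rightarrow> (\<lambda>(u0, u1). (a * u0 + b * u1, c * u0 + d * u1)) ` x)"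

definition invertible2 :: "'a::field \<times> 'a \<times> 'a \<times> 'a \<Rightarrow> bool" where
  "invertible2 M \<longleftrightarrow> (case M of (a, b, c, d) \<Rightarrow> a * d - b * c \<noteq> 0)"

text \<open>Automorphisms of P1 x P1 over kbar: (PGL2 x PGL2) semidirect Z/2.\<close>
definition geom_aut :: "(_ \<Rightarrow> ('a::field \<times> 'a) set \<times> ('a \<times> 'a) set) \<Rightarrow> bool" where
  "geom_aut \<alpha> \<longleftrightarrow> (\<exists>A B. invertible2 A \<and> invertible2 B \<and>
     ((\<forall>z\<in>QP. \<alpha> z = (mat_act A (fst z), mat_act B (snd z))) \<or>
      (\<forall>z\<in>QP. \<alpha> z = (mat_act A (snd z), mat_act B (fst z)))))"

text \<open>Aut_k(Q^L): geometric automorphisms commuting with the Galois action (Galois descent).\<close>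
definition aut_QL :: "'a::field set \<Rightarrow> 'a set \<Rightarrow> (_ \<Rightarrow> ('a \<times> 'a) set \<times> ('a \<times> 'a) set) \<Rightarrow> bool" where
  "aut_QL k L \<alpha> \<longleftrightarrow> geom_aut \<alpha> \<and> (\<forall>\<sigma>\<in>Gal k. \<forall>z\<in>QP. \<alpha> (tw_act L \<sigma> z) = tw_act L \<sigma> (\<alpha> z))"

end

theory Submission
  imports Defs
begin


lemma gal_add: "\<sigma> \<in> Gal F \<Longrightarrow> \<sigma> (a + b) = \<sigma> a + \<sigma> b" by (simp add: Gal_def)
lemma gal_mult: "\<sigma> \<in> Gal F \<Longrightarrow> \<sigma> (a * b) = \<sigma> a * \<sigma> b" by (simp add: Gal_def)
lemma gal_fix: "\<sigma> \<in> Gal F \<Longrightarrow> a \<in> F \<Longrightarrow> \<sigma> a = a" by (simp add: Gal_def)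
lemma gal_bij: "\<sigma> \<in> Gal F \<Longrightarrow> bij \<sigma>" by (simp add: Gal_def)
lemma gal_zero: "\<sigma> \<in> Gal F \<Longrightarrow> \<sigma> (0::'a::field) = 0"
proof -
  assume "\<sigma> \<in> Gal F"
  then have "\<sigma> (0 + 0) = \<sigma> 0 + \<sigma> (0::'a)" by (rule gal_add)
  then have "\<sigma> 0 + \<sigma> 0 = \<sigma> 0 + (0::'a)" by simp
  then show ?thesis by (rule add_left_imp_eq)
qed
lemma gal_neg: "\<sigma> \<in> Gal F \<Longrightarrow> \<sigma> (- a) = - \<sigma> (a::'a::field)"
proof -
  assume g: "\<sigma> \<in> Gal F"
  then have "\<sigma> (a + - a) = \<sigma> a + \<sigma> (- a)" by (rule gal_add)
  then have "\<sigma> a + \<sigma> (- a) = 0" using gal_zero[OF g] by simp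
  then show ?thesis by (simp add: add_eq_0_iff)
qed
lemma gal_diff: "\<sigma> \<in> Gal F \<Longrightarrow> \<sigma> (a - b) = \<sigma> a - \<sigma> (b::'a::field)"
  using gal_add[of \<sigma> F a "- b"] gal_neg[of \<sigma> F b] by simp
lemma gal_inj: "\<sigma> \<in> Gal F \<Longrightarrow> \<sigma> a = \<sigma> b \<Longrightarrow> a = b"
  using gal_bij bij_is_inj injD by metis
lemma gal_nz: "\<sigma> \<in> Gal F \<Longrightarrow> (a::'a::field) \<noteq> 0 \<Longrightarrow> \<sigma> a \<noteq> 0"
  using gal_inj gal_zero by metis
lemma gal_id: "id \<in> Gal F" by (simp add: Gal_def)
lemma gal_comp: "\<sigma> \<in> Gal F \<Longrightarrow> \<tau> \<in> Gal F \<Longrightarrow> \<forall>a\<in>G. \<sigma> (\<tau> a) = a \<Longrightarrow> \<sigma> \<circ> \<tau> \<in> Gal G"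
proof -
  assume a: "\<sigma> \<in> Gal F" "\<tau> \<in> Gal F" "\<forall>a\<in>G. \<sigma> (\<tau> a) = a"
  have "bij (\<sigma> \<circ> \<tau>)" using gal_bij[OF a(1)] gal_bij[OF a(2)] by (rule bij_comp[rotated])
  moreover have "\<forall>x y. (\<sigma> \<circ> \<tau>) (x + y) = (\<sigma> \<circ> \<tau>) x + (\<sigma> \<circ> \<tau>) y \<and> (\<sigma> \<circ> \<tau>) (x * y) = (\<sigma> \<circ> \<tau>) x * (\<sigma> \<circ> \<tau>) y"
    using gal_add[OF a(1)] gal_add[OF a(2)] gal_mult[OF a(1)] gal_mult[OF a(2)] by simp
  ultimately show ?thesis using a(3) unfolding Gal_def by simp
qed
lemma gal_triv: "\<sigma> \<in> Gal F \<Longrightarrow> \<forall>a\<in>G. \<sigma> a = a \<Longrightarrow> \<sigma> \<in> Gal G"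
  by (auto simp: Gal_def)

lemma proj_pt_mem: "u \<in> proj_pt u"
  unfolding proj_pt_def by (rule CollectI, rule exI[of _ 1]) simp

lemma proj_pt_img: "proj_pt u = (\<lambda>e. (e * fst u, e * snd u)) ` {e. e \<noteq> 0}"
  unfolding proj_pt_def by auto

lemma proj_pt_scale: "(c::'a::field) \<noteq> 0 \<Longrightarrow> proj_pt (c * fst u, c * snd u) = proj_pt u"
proof -
  assume c: "c \<noteq> 0"
  have "(\<lambda>e. e * c) ` {e. e \<noteq> 0} = {e::'a. e \<noteq> 0}"
  proof (rule set_eqI, rule iffI)
    fix x assume "x \<in> (\<lambda>e. e * c) ` {e. e \<noteq> 0}" then show "x \<in> {e. e \<noteq> 0}" using c by auto
  next
    fix x :: 'a assume "x \<in> {e. e \<noteq> 0}"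
    then have "x / c \<noteq> 0" "x = (x / c) * c" using c by auto
    then show "x \<in> (\<lambda>e. e * c) ` {e. e \<noteq> 0}" by blast
  qed
  then have "proj_pt u = (\<lambda>e. (e * fst u, e * snd u)) ` ((\<lambda>e. e * c) ` {e. e \<noteq> 0})"
    by (simp add: proj_pt_img)
  also have "\<dots> = proj_pt (c * fst u, c * snd u)"
    unfolding image_image proj_pt_img by (simp add: mult.assoc mult.commute mult.left_commute)
  finally show ?thesis by simp
qed

lemma P1_mem: "a \<in> P1 \<Longrightarrow> v \<in> a \<Longrightarrow> v \<noteq> (0::'a::field, 0) \<and> a = proj_pt v"
proof -
  assume "a \<in> P1" "v \<in> a"
  then obtain u where u: "u \<noteq> (0,0)" "a = proj_pt u" by (auto simp: P1_def)
  with \<open>v \<in> a\<close> obtain c where c: "c \<noteq> 0" "v = (c * fst u, c * snd u)" by (auto simp: proj_pt_def)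
  then have "v \<noteq> (0,0)" using u by (cases u) auto
  moreover have "a = proj_pt v" using u c proj_pt_scale by metis
  ultimately show ?thesis by simp
qed

lemma proj_pt_eq_iff:
  assumes "u \<noteq> (0::'a::field, 0)" "v \<noteq> (0, 0)"
  shows "proj_pt u = proj_pt v \<longleftrightarrow> fst u * snd v = snd u * fst v"
proof
  assume "proj_pt u = proj_pt v"
  then have "u \<in> proj_pt v" using proj_pt_mem by metis
  then obtain c where "u = (c * fst v, c * snd v)" by (auto simp: proj_pt_def)
  then show "fst u * snd v = snd u * fst v" by simp
next
  assume d: "fst u * snd v = snd u * fst v"
  obtain u0 u1 v0 v1 where uv: "u = (u0,u1)" "v = (v0, v1)" by (cases u, cases v) auto
  show "proj_pt u = proj_pt v"
  proof (cases "v0 = 0")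
    case True
    then have v1: "v1 \<noteq> 0" using assms uv by auto
    then have "u0 = 0" using d True uv by simp
    then have "u = ((u1/v1) * v0, (u1/v1) * v1)" using True v1 uv by simp
    moreover have "u1/v1 \<noteq> 0" using \<open>u0 = 0\<close> assms uv v1 by auto
    ultimately show ?thesis using proj_pt_scale[of "u1/v1" v] uv by simp
  next
    case False
    then have "u1 = (u0/v0) * v1" using d uv by (simp add: field_simps)
    then have "u = ((u0/v0) * v0, (u0/v0) * v1)" using False uv by simp
    moreover have "u0/v0 \<noteq> 0" using \<open>u1 = _\<close> assms uv False by auto
    ultimately show ?thesis using proj_pt_scale[of "u0/v0" v] uv by simp
  qed
qed

lemma mat_act_proj: "mat_act (a,b,c,d) (proj_pt u) = proj_pt (a * fst u + b * snd u, c * fst u + d * snd u)"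
  unfolding mat_act_def proj_pt_img image_image
  apply simp
  apply (rule image_cong[OF refl])
   apply (auto simp: algebra_simps)
  done

definition sigM :: "('a \<Rightarrow> 'a) \<Rightarrow> 'a \<times> 'a \<times> 'a \<times> 'a \<Rightarrow> 'a \<times> 'a \<times> 'a \<times> 'a" where
  "sigM \<sigma> M = (case M of (a,b,c,d) \<Rightarrow> (\<sigma> a, \<sigma> b, \<sigma> c, \<sigma> d))"

lemma conj_mat: "\<sigma> \<in> Gal F \<Longrightarrow> conj_pt \<sigma> (mat_act M u) = mat_act (sigM \<sigma> M) (conj_pt \<sigma> u)"
  unfolding conj_pt_def mat_act_def sigM_def image_image
  apply (cases M)
  apply (simp add: image_image)
  apply (rule image_cong[OF refl])
   apply (auto simp: gal_add gal_mult)
  done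

lemma conj_proj: "\<sigma> \<in> Gal F \<Longrightarrow> conj_pt \<sigma> (proj_pt u) = proj_pt (\<sigma> (fst u), \<sigma> (snd u))"
proof -
  assume g: "\<sigma> \<in> Gal F"
  have s: "\<sigma> ` {e. e \<noteq> 0} = {e::'a. e \<noteq> 0}"
  proof (rule set_eqI, rule iffI)
    fix x assume "x \<in> \<sigma> ` {e. e \<noteq> 0}" then show "x \<in> {e. e \<noteq> 0}" using gal_nz[OF g] by auto
  next
    fix x :: 'a assume x: "x \<in> {e. e \<noteq> 0}"
    obtain c' where c': "\<sigma> c' = x" using gal_bij[OF g] by (metis bij_pointE)
    then have "c' \<noteq> 0" using x gal_zero[OF g] by auto
    then show "x \<in> \<sigma> ` {e. e \<noteq> 0}" using c' by blast
  qed
  have "conj_pt \<sigma> (proj_pt u) = (\<lambda>e. (e * \<sigma> (fst u), e * \<sigma> (snd u))) ` (\<sigma> ` {e. e \<noteq> 0})"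
    unfolding conj_pt_def proj_pt_img image_image by (simp add: gal_mult[OF g])
  then show ?thesis unfolding s proj_pt_img by simp
qed

lemma conj_P1: "\<sigma> \<in> Gal F \<Longrightarrow> a \<in> P1 \<Longrightarrow> conj_pt \<sigma> a \<in> P1"
proof -
  assume g: "\<sigma> \<in> Gal F" "a \<in> P1"
  then obtain u where u: "u \<noteq> (0,0)" "a = proj_pt u" by (auto simp: P1_def)
  then have "(\<sigma> (fst u), \<sigma> (snd u)) \<noteq> (0,0)" using gal_nz[OF g(1)] by (cases u) auto
  then show ?thesis using conj_proj[OF g(1)] u unfolding P1_def by blast
qed

lemma conj_comp: "conj_pt \<sigma> (conj_pt \<tau> x) = conj_pt (\<sigma> \<circ> \<tau>) x"
  unfolding conj_pt_def by (auto simp: image_image intro!: image_cong)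

lemma conj_id: "conj_pt id x = x"
  unfolding conj_pt_def by auto

lemma conj_inj: "\<sigma> \<in> Gal F \<Longrightarrow> conj_pt \<sigma> a = conj_pt \<sigma> b \<Longrightarrow> a = b"
proof -
  assume g: "\<sigma> \<in> Gal F" and e: "conj_pt \<sigma> a = conj_pt \<sigma> b"
  have "inj (\<lambda>(x, y). (\<sigma> x, \<sigma> y))" using gal_inj[OF g] by (auto simp: inj_def)
  then show ?thesis using e unfolding conj_pt_def by (simp add: inj_image_eq_iff)
qed



definition colv :: "'a::field \<times> 'a \<Rightarrow> ('a \<times> 'a) set \<Rightarrow> ('a \<times> 'a) set \<Rightarrow> 'a \<times> 'a" where
  "colv t a b = (THE v. v \<in> a \<and> (fst t - fst v, snd t - snd v) \<in> b)"

definition mA :: "'a::field \<times> 'a \<Rightarrow> ('a \<times> 'a) set \<Rightarrow> ('a \<times> 'a) set \<Rightarrow> 'a \<times> 'a \<times> 'a \<times> 'a" where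
  "mA t a b = (let v = colv t a b in (snd t - snd v, - (fst t - fst v), - snd v, fst v))"

lemma EU:
  fixes t :: "'a::field \<times> 'a"
  assumes "a \<in> P1" "b \<in> P1" "a \<noteq> b" "t \<noteq> (0,0)" "proj_pt t \<noteq> a" "proj_pt t \<noteq> b"
  shows "\<exists>!v. v \<in> a \<and> (fst t - fst v, snd t - snd v) \<in> b"
    and "colv t a b \<in> a"
    and "(fst t - fst (colv t a b), snd t - snd (colv t a b)) \<in> b"
    and "fst (colv t a b) * (snd t - snd (colv t a b)) - snd (colv t a b) * (fst t - fst (colv t a b)) \<noteq> 0"
proof -
  obtain p where p: "p \<noteq> (0,0)" "a = proj_pt p" using assms(1) by (auto simp: P1_def)
  obtain q where q: "q \<noteq> (0,0)" "b = proj_pt q" using assms(2) by (auto simp: P1_def)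
  obtain p0 p1 q0 q1 t0 t1 where pq: "p = (p0,p1)" "q = (q0,q1)" "t = (t0,t1)"
    by (cases p, cases q, cases t) auto
  define D where "D = p0 * q1 - p1 * q0"
  have "\<not> (fst p * snd q = snd p * fst q)" using assms(3) proj_pt_eq_iff[OF p(1) q(1)] p(2) q(2) by metis
  then have D: "D \<noteq> 0" using pq D_def by simp
  have "\<not> (fst t * snd q = snd t * fst q)" using assms(6) proj_pt_eq_iff[OF assms(4) q(1)] q(2) by metis
  then have Dt: "t0 * q1 - t1 * q0 \<noteq> 0" using pq by simp
  have "\<not> (fst t * snd p = snd t * fst p)" using assms(5) proj_pt_eq_iff[OF assms(4) p(1)] p(2) by metis
  then have Dt2: "p0 * t1 - p1 * t0 \<noteq> 0" using pq by (simp add: mult.commute)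
  define l where "l = (t0 * q1 - t1 * q0) / D"
  define m where "m = (p0 * t1 - p1 * t0) / D"
  have l0: "l \<noteq> 0" using Dt D l_def by simp
  have m0: "m \<noteq> 0" using Dt2 D m_def by simp
  have "l * p0 + m * q0 = ((t0 * q1 - t1 * q0) * p0 + (p0 * t1 - p1 * t0) * q0) / D"
    unfolding l_def m_def by (simp add: add_divide_distrib)
  also have "(t0 * q1 - t1 * q0) * p0 + (p0 * t1 - p1 * t0) * q0 = t0 * D" unfolding D_def by algebra
  finally have e0: "t0 = l * p0 + m * q0" using D by simp
  have "l * p1 + m * q1 = ((t0 * q1 - t1 * q0) * p1 + (p0 * t1 - p1 * t0) * q1) / D"
    unfolding l_def m_def by (simp add: add_divide_distrib)
  also have "(t0 * q1 - t1 * q0) * p1 + (p0 * t1 - p1 * t0) * q1 = t1 * D" unfolding D_def by algebra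
  finally have e1: "t1 = l * p1 + m * q1" using D by simp
  define v where "v = (l * p0, l * p1)"
  have vin: "v \<in> a" using l0 p pq unfolding v_def proj_pt_def by auto
  have win: "(fst t - fst v, snd t - snd v) \<in> b"
    using m0 q pq e0 e1 unfolding v_def proj_pt_def by auto
  have uniq: "v' = v" if h: "v' \<in> a" "(fst t - fst v', snd t - snd v') \<in> b" for v'
  proof -
    obtain c where c: "v' = (c * p0, c * p1)" using h(1) p pq by (auto simp: proj_pt_def)
    obtain d where d: "t0 - c * p0 = d * q0" "t1 - c * p1 = d * q1" using h(2) q pq c by (auto simp: proj_pt_def)
    have d0: "t0 = c * p0 + d * q0" "t1 = c * p1 + d * q1" using d by (simp_all add: algebra_simps)
    have "c * D = (t0 * q1 - t1 * q0)" unfolding D_def d0 by algebra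
    then have "c = (t0 * q1 - t1 * q0) / D" using D by (simp add: eq_divide_eq)
    then have "c = l" using l_def by simp
    then show ?thesis using c v_def by simp
  qed
  show eu: "\<exists>!v. v \<in> a \<and> (fst t - fst v, snd t - snd v) \<in> b"
  proof (rule ex1I[of _ v])
    show "v \<in> a \<and> (fst t - fst v, snd t - snd v) \<in> b" using vin win by simp
  next
    fix v' assume "v' \<in> a \<and> (fst t - fst v', snd t - snd v') \<in> b"
    then show "v' = v" using uniq by simp
  qed
  have cv: "colv t a b = v" unfolding colv_def
  proof (rule the_equality)
    show "v \<in> a \<and> (fst t - fst v, snd t - snd v) \<in> b" using vin win by simp
  next
    fix v' assume "v' \<in> a \<and> (fst t - fst v', snd t - snd v') \<in> b"
    then show "v' = v" using uniq by simp
  qed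
  show "colv t a b \<in> a" using cv vin by simp
  show "(fst t - fst (colv t a b), snd t - snd (colv t a b)) \<in> b" using cv win by simp
  have "fst v * (snd t - snd v) - snd v * (fst t - fst v) = l * m * D"
    unfolding v_def D_def using e0 e1 pq by (simp add: algebra_simps)
  then show "fst (colv t a b) * (snd t - snd (colv t a b)) - snd (colv t a b) * (fst t - fst (colv t a b)) \<noteq> 0"
    using cv l0 m0 D by simp
qed



lemma mA_props:
  fixes t :: "'a::field \<times> 'a"
  assumes h: "a \<in> P1" "b \<in> P1" "a \<noteq> b" "t \<noteq> (0,0)" "proj_pt t \<noteq> a" "proj_pt t \<noteq> b"
  shows "invertible2 (mA t a b)" "mat_act (mA t a b) a = proj_pt (1,0)" "mat_act (mA t a b) b = proj_pt (0,1)"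
proof -
  define v where "v = colv t a b"
  define w where "w = (fst t - fst v, snd t - snd v)"
  have vin: "v \<in> a" and win: "w \<in> b" using EU[OF h] unfolding v_def w_def by auto
  have det: "fst v * snd w - snd v * fst w \<noteq> 0" using EU(4)[OF h] unfolding v_def w_def by simp
  have m: "mA t a b = (snd w, - fst w, - snd v, fst v)" unfolding mA_def v_def w_def Let_def by simp
  show "invertible2 (mA t a b)" unfolding m invertible2_def using det by (simp add: algebra_simps)
  have a: "a = proj_pt v" using P1_mem[OF h(1) vin] by simp
  have b: "b = proj_pt w" using P1_mem[OF h(2) win] by simp
  define e where "e = fst v * snd w - snd v * fst w"
  have ma: "mat_act (mA t a b) a = mat_act (snd w, - fst w, - snd v, fst v) (proj_pt v)"
    by (simp add: m a[symmetric])
  have "mat_act (mA t a b) a = proj_pt (e * 1, e * 0)"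
    unfolding ma mat_act_proj e_def by (simp add: algebra_simps)
  also have "\<dots> = proj_pt (1,0)" using proj_pt_scale[of e "(1,0)"] det e_def by simp
  finally show "mat_act (mA t a b) a = proj_pt (1,0)" .
  have mb: "mat_act (mA t a b) b = mat_act (snd w, - fst w, - snd v, fst v) (proj_pt w)"
    by (simp add: m b[symmetric])
  have "mat_act (mA t a b) b = proj_pt (e * 0, e * 1)"
    unfolding mb mat_act_proj e_def by (simp add: algebra_simps)
  also have "\<dots> = proj_pt (0,1)" using proj_pt_scale[of e "(0,1)"] det e_def by simp
  finally show "mat_act (mA t a b) b = proj_pt (0,1)" .
qed

definition sig2 :: "('a \<Rightarrow> 'a) \<Rightarrow> 'a \<times> 'a \<Rightarrow> 'a \<times> 'a" where
  "sig2 \<sigma> u = (\<sigma> (fst u), \<sigma> (snd u))"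

lemma conj_sig2: "conj_pt \<sigma> x = sig2 \<sigma> ` x"
  unfolding conj_pt_def sig2_def by (auto intro!: image_cong)

lemma mA_conj:
  fixes t :: "'a::field \<times> 'a"
  assumes h: "a \<in> P1" "b \<in> P1" "a \<noteq> b" "t \<noteq> (0,0)" "proj_pt t \<noteq> a" "proj_pt t \<noteq> b"
    and g: "\<sigma> \<in> Gal F" and t: "\<sigma> (fst t) = fst t" "\<sigma> (snd t) = snd t"
  shows "sigM \<sigma> (mA t a b) = mA t (conj_pt \<sigma> a) (conj_pt \<sigma> b)"
proof -
  define v where "v = colv t a b"
  have vin: "v \<in> a" and win: "(fst t - fst v, snd t - snd v) \<in> b" using EU[OF h] unfolding v_def by auto
  obtain x where x: "\<forall>y. y \<in> a \<and> (fst t - fst y, snd t - snd y) \<in> b \<longrightarrow> y = x"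
    using EU(1)[OF h] by (elim ex1E) blast
  have uniq: "\<And>v'. v' \<in> a \<Longrightarrow> (fst t - fst v', snd t - snd v') \<in> b \<Longrightarrow> v' = v"
  proof -
    fix v' assume "v' \<in> a" "(fst t - fst v', snd t - snd v') \<in> b"
    then have "v' = x" using x by blast
    moreover have "v = x" using x vin win by blast
    ultimately show "v' = v" by simp
  qed
  have injs: "inj (sig2 \<sigma>)" using gal_inj[OF g] unfolding inj_def sig2_def by auto
  have sd: "sig2 \<sigma> (fst t - fst u, snd t - snd u) = (fst t - fst (sig2 \<sigma> u), snd t - snd (sig2 \<sigma> u))" for u
    unfolding sig2_def using gal_diff[OF g] t by simp
  have c: "colv t (conj_pt \<sigma> a) (conj_pt \<sigma> b) = sig2 \<sigma> v"
    unfolding colv_def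
  proof (rule the_equality)
    show "sig2 \<sigma> v \<in> conj_pt \<sigma> a \<and> (fst t - fst (sig2 \<sigma> v), snd t - snd (sig2 \<sigma> v)) \<in> conj_pt \<sigma> b"
    proof
      show "sig2 \<sigma> v \<in> conj_pt \<sigma> a" unfolding conj_sig2 using vin by (rule imageI)
      have "sig2 \<sigma> (fst t - fst v, snd t - snd v) \<in> conj_pt \<sigma> b" unfolding conj_sig2 using win by (rule imageI)
      then show "(fst t - fst (sig2 \<sigma> v), snd t - snd (sig2 \<sigma> v)) \<in> conj_pt \<sigma> b" unfolding sd .
    qed
  next
    fix v' assume "v' \<in> conj_pt \<sigma> a \<and> (fst t - fst v', snd t - snd v') \<in> conj_pt \<sigma> b"
    then obtain u where u: "u \<in> a" "v' = sig2 \<sigma> u" and "(fst t - fst v', snd t - snd v') \<in> sig2 \<sigma> ` b"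
      unfolding conj_sig2 by auto
    then have "sig2 \<sigma> (fst t - fst u, snd t - snd u) \<in> sig2 \<sigma> ` b" using sd[of u] by simp
    then have "(fst t - fst u, snd t - snd u) \<in> b" using injs by (simp add: inj_image_mem_iff)
    then have "u = v" using uniq u by simp
    then show "v' = sig2 \<sigma> v" using u by simp
  qed
  have m1: "mA t a b = (snd t - snd v, - (fst t - fst v), - snd v, fst v)"
    unfolding mA_def Let_def v_def by simp
  have m2: "mA t (conj_pt \<sigma> a) (conj_pt \<sigma> b) = (snd t - \<sigma> (snd v), - (fst t - \<sigma> (fst v)), - \<sigma> (snd v), \<sigma> (fst v))"
    unfolding mA_def Let_def c by (simp add: sig2_def)
  show ?thesis unfolding m1 m2 sigM_def
    by (simp add: gal_diff[OF g] gal_neg[OF g] t)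
qed

lemma QUAD:
  fixes k L :: "'a::field set"
  assumes k: "is_subfield k" and q: "quadratic_ext k L"
  shows "\<exists>\<theta>\<in>L. \<forall>a\<in>L. \<exists>d1\<in>k. \<exists>d2\<in>k. a = d1 + d2 * \<theta>"
proof -
  have L: "is_subfield L" using q by (simp add: quadratic_ext_def)
  obtain b1 b2 where b: "b1 \<in> L" "b2 \<in> L" "\<forall>x\<in>L. \<exists>!c. c \<in> k \<times> k \<and> x = fst c * b1 + snd c * b2"
    using q unfolding quadratic_ext_def by blast
  have kc: "x \<in> k \<Longrightarrow> y \<in> k \<Longrightarrow> x + y \<in> k" "x \<in> k \<Longrightarrow> y \<in> k \<Longrightarrow> x * y \<in> k"
    "x \<in> k \<Longrightarrow> - x \<in> k" "x \<in> k \<Longrightarrow> inverse x \<in> k" for x y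
    using k unfolding is_subfield_def by auto
  have kd: "x \<in> k \<Longrightarrow> y \<in> k \<Longrightarrow> x - y \<in> k" for x y using kc(1)[of x "- y"] kc(3)[of y]
    by simp
  have kdiv: "x \<in> k \<Longrightarrow> y \<in> k \<Longrightarrow> x / y \<in> k" for x y using kc(2,4) by (simp add: divide_inverse)
  have rep: "\<forall>x\<in>L. \<exists>c1\<in>k. \<exists>c2\<in>k. x = c1 * b1 + c2 * b2"
  proof
    fix x assume "x \<in> L"
    then obtain c where c: "c \<in> k \<times> k" "x = fst c * b1 + snd c * b2" using b(3) by blast
    then show "\<exists>c1\<in>k. \<exists>c2\<in>k. x = c1 * b1 + c2 * b2" by (cases c) auto
  qed
  have "1 \<in> L" using L by (simp add: is_subfield_def)
  then obtain e1 e2 where e: "e1 \<in> k" "e2 \<in> k" "1 = e1 * b1 + e2 * b2" using rep by blast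
  show ?thesis
  proof (cases "e2 = 0")
    case False
    show ?thesis
    proof (rule bexI[of _ b1], rule ballI)
      fix a assume "a \<in> L"
      then obtain c1 c2 where c: "c1 \<in> k" "c2 \<in> k" "a = c1 * b1 + c2 * b2" using rep by blast
      have "b2 = (1 - e1 * b1) / e2" using e(3) False by (simp add: field_simps)
      then have "a = c1 * b1 + c2 * ((1 - e1 * b1) / e2)" using c(3) by simp
      also have "\<dots> = c2 / e2 + (c1 - c2 * e1 / e2) * b1" using False by (simp add: field_simps)
      finally have "a = c2 / e2 + (c1 - c2 * e1 / e2) * b1" .
      moreover have "c2 / e2 \<in> k" "c1 - c2 * e1 / e2 \<in> k" using c e kd kdiv kc by auto
      ultimately show "\<exists>d1\<in>k. \<exists>d2\<in>k. a = d1 + d2 * b1" by blast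
    qed (rule b(1))
  next
    case True
    then have e1: "e1 \<noteq> 0" using e(3) by auto
    show ?thesis
    proof (rule bexI[of _ b2], rule ballI)
      fix a assume "a \<in> L"
      then obtain c1 c2 where c: "c1 \<in> k" "c2 \<in> k" "a = c1 * b1 + c2 * b2" using rep by blast
      have "b1 = (1 - e2 * b2) / e1" using e(3) e1 by (simp add: field_simps)
      then have "a = c1 * ((1 - e2 * b2) / e1) + c2 * b2" using c(3) by simp
      also have "\<dots> = c1 / e1 + (c2 - c1 * e2 / e1) * b2" using e1 by (simp add: field_simps)
      finally have "a = c1 / e1 + (c2 - c1 * e2 / e1) * b2" .
      moreover have "c1 / e1 \<in> k" "c2 - c1 * e2 / e1 \<in> k" using c e kd kdiv kc by auto
      ultimately show "\<exists>d1\<in>k. \<exists>d2\<in>k. a = d1 + d2 * b2" by blast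
    qed (rule b(2))
  qed
qed

lemma INV:
  fixes k L :: "'a::field set"
  assumes k: "is_subfield k" and q: "quadratic_ext k L"
    and s: "\<sigma> \<in> Gal k" "\<not> (\<forall>a\<in>L. \<sigma> a = a)" and t: "\<tau> \<in> Gal k" "\<not> (\<forall>a\<in>L. \<tau> a = a)"
  shows "\<forall>a\<in>L. \<sigma> (\<tau> a) = a"
proof -
  have L: "is_subfield L" using q by (simp add: quadratic_ext_def)
  obtain \<theta> where th: "\<theta> \<in> L" "\<forall>a\<in>L. \<exists>d1\<in>k. \<exists>d2\<in>k. a = d1 + d2 * \<theta>" using QUAD[OF k q] by blast
  have "\<theta> * \<theta> \<in> L" using L th(1) by (simp add: is_subfield_def)
  then obtain c1 c2 where c: "c1 \<in> k" "c2 \<in> k" "\<theta> * \<theta> = c1 + c2 * \<theta>" using th(2) by blast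
  have img: "\<rho> (d1 + d2 * \<theta>) = d1 + d2 * \<rho> \<theta>" if "\<rho> \<in> Gal k" "d1 \<in> k" "d2 \<in> k" for \<rho> d1 d2
    using that by (simp add: gal_add gal_mult gal_fix)
  have nt: "\<rho> \<theta> = c2 - \<theta>" if r: "\<rho> \<in> Gal k" "\<not> (\<forall>a\<in>L. \<rho> a = a)" for \<rho>
  proof -
    have "\<rho> \<theta> * \<rho> \<theta> = \<rho> (\<theta> * \<theta>)" using gal_mult[OF r(1)] by simp
    also have "\<dots> = c1 + c2 * \<rho> \<theta>" unfolding c(3) by (rule img[OF r(1) c(1) c(2)])
    finally have e1: "\<rho> \<theta> * \<rho> \<theta> - (c1 + c2 * \<rho> \<theta>) = 0" by simp
    have e2: "\<theta> * \<theta> - (c1 + c2 * \<theta>) = 0" using c(3) by simp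
    have "(\<rho> \<theta> - \<theta>) * (\<rho> \<theta> - (c2 - \<theta>)) = (\<rho> \<theta> * \<rho> \<theta> - (c1 + c2 * \<rho> \<theta>)) - (\<theta> * \<theta> - (c1 + c2 * \<theta>))"
      by (simp add: algebra_simps)
    then have "(\<rho> \<theta> - \<theta>) * (\<rho> \<theta> - (c2 - \<theta>)) = 0" using e1 e2 by simp
    moreover have "\<rho> \<theta> \<noteq> \<theta>"
    proof
      assume "\<rho> \<theta> = \<theta>"
      have "\<forall>a\<in>L. \<rho> a = a"
      proof
        fix a assume "a \<in> L"
        then obtain d1 d2 where d: "d1 \<in> k" "d2 \<in> k" "a = d1 + d2 * \<theta>" using th(2) by blast
        show "\<rho> a = a" unfolding d(3) img[OF r(1) d(1) d(2)] \<open>\<rho> \<theta> = \<theta>\<close> ..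
      qed
      then show False using r(2) by simp
    qed
    ultimately show ?thesis by simp
  qed
  show ?thesis
  proof
    fix a assume "a \<in> L"
    then obtain d1 d2 where d: "d1 \<in> k" "d2 \<in> k" "a = d1 + d2 * \<theta>" using th(2) by blast
    have ta: "\<tau> a = (d1 + d2 * c2) + (- d2) * \<theta>" using img[OF t(1) d(1,2)] nt[OF t] d(3)
      by (simp add: algebra_simps)
    moreover have "d1 + d2 * c2 \<in> k" "- d2 \<in> k" using k d c unfolding is_subfield_def by auto
    moreover have "\<sigma> ((d1 + d2 * c2) + (- d2) * \<theta>) = (d1 + d2 * c2) + (- d2) * \<sigma> \<theta>"
      by (rule img[OF s(1)]) fact+
    ultimately have "\<sigma> (\<tau> a) = (d1 + d2 * c2) + (- d2) * (c2 - \<theta>)" using nt[OF s] ta by simp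
    then show "\<sigma> (\<tau> a) = a" using d(3) by (simp add: algebra_simps)
  qed
qed



lemma tw_triv: fixes L :: "'a::field set" shows "(\<forall>a\<in>L. \<sigma> a = a) \<Longrightarrow> tw_act L \<sigma> z = (conj_pt \<sigma> (fst z), conj_pt \<sigma> (snd z))"
  unfolding tw_act_def by (rule if_P)
lemma tw_nontriv: fixes L :: "'a::field set" shows "\<not> (\<forall>a\<in>L. \<sigma> a = a) \<Longrightarrow> tw_act L \<sigma> z = (conj_pt \<sigma> (snd z), conj_pt \<sigma> (fst z))"
  unfolding tw_act_def by (rule if_not_P)

lemma AUT:
  fixes A B :: "'a::field \<times> 'a \<times> 'a \<times> 'a" and k L :: "'a set"
  assumes "invertible2 A" "invertible2 B"
    and tr: "\<forall>\<sigma>\<in>Gal k. (\<forall>a\<in>L. \<sigma> a = a) \<longrightarrow> sigM \<sigma> A = A \<and> sigM \<sigma> B = B"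
    and nt: "\<forall>\<sigma>\<in>Gal k. \<not> (\<forall>a\<in>L. \<sigma> a = a) \<longrightarrow> sigM \<sigma> A = B \<and> sigM \<sigma> B = A"
  shows "aut_QL k L (\<lambda>z. (mat_act A (fst z), mat_act B (snd z)))"
  unfolding aut_QL_def
proof (intro conjI ballI)
  show "geom_aut (\<lambda>z. (mat_act A (fst z), mat_act B (snd z)))"
    unfolding geom_aut_def using assms(1,2) by blast
next
  fix \<sigma> :: "'a \<Rightarrow> 'a" and z :: "('a \<times> 'a) set \<times> ('a \<times> 'a) set" assume g: "\<sigma> \<in> Gal k" and "z \<in> QP"
  show "(\<lambda>z. (mat_act A (fst z), mat_act B (snd z))) (tw_act L \<sigma> z) =
         tw_act L \<sigma> ((\<lambda>z. (mat_act A (fst z), mat_act B (snd z))) z)"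
  proof (cases "\<forall>a\<in>L. \<sigma> a = a")
    case True
    then show ?thesis using tr g by (simp add: tw_triv conj_mat[OF g])
  next
    case False
    then show ?thesis using nt g by (simp add: tw_nontriv conj_mat[OF g])
  qed
qed

lemma pick_t:
  fixes k :: "'a::field set"
  assumes k: "is_subfield k" and a: "a \<in> P1" and b: "b \<in> P1"
  shows "\<exists>t. fst t \<in> k \<and> snd t \<in> k \<and> t \<noteq> (0,0) \<and> proj_pt t \<noteq> a \<and> proj_pt t \<noteq> b"
proof (rule ccontr)
  assume H: "\<not> ?thesis"
  have k01: "0 \<in> k" "1 \<in> k" using k by (auto simp: is_subfield_def)
  have d1: "proj_pt (1::'a,0) \<noteq> proj_pt (0,1)" using proj_pt_eq_iff[of "(1::'a,0)" "(0,1)"] by simp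
  have d2: "proj_pt (1::'a,0) \<noteq> proj_pt (1,1)" using proj_pt_eq_iff[of "(1::'a,0)" "(1,1)"] by simp
  have d3: "proj_pt (0::'a,1) \<noteq> proj_pt (1,1)" using proj_pt_eq_iff[of "(0::'a,1)" "(1,1)"] by simp
  have h: "proj_pt (u::'a \<times> 'a) = a \<or> proj_pt u = b" if "fst u \<in> k" "snd u \<in> k" "u \<noteq> (0,0)" for u
  proof (rule ccontr)
    assume "\<not> (proj_pt u = a \<or> proj_pt u = b)"
    then have "fst u \<in> k \<and> snd u \<in> k \<and> u \<noteq> (0,0) \<and> proj_pt u \<noteq> a \<and> proj_pt u \<noteq> b" using that by simp
    then show False using H by blast
  qed
  have "proj_pt (1::'a,0) = a \<or> proj_pt (1::'a,0) = b" using h[of "(1,0)"] k01 by simp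
  moreover have "proj_pt (0::'a,1) = a \<or> proj_pt (0::'a,1) = b" using h[of "(0,1)"] k01 by simp
  moreover have "proj_pt (1::'a,1) = a \<or> proj_pt (1::'a,1) = b" using h[of "(1,1)"] k01 by simp
  ultimately show False using d1 d2 d3 by metis
qed

lemma conj_fix_t:
  assumes "\<sigma> \<in> Gal k" "fst t \<in> k" "snd t \<in> k"
  shows "conj_pt \<sigma> (proj_pt t) = proj_pt t"
  using conj_proj[OF assms(1)] gal_fix[OF assms(1) assms(2)] gal_fix[OF assms(1) assms(3)] by simp

lemma mA_conjk:
  fixes t :: "'a::field \<times> 'a"
  assumes h: "a \<in> P1" "b \<in> P1" "a \<noteq> b" "t \<noteq> (0,0)" "proj_pt t \<noteq> a" "proj_pt t \<noteq> b"
    and tk: "fst t \<in> k" "snd t \<in> k" and g: "\<sigma> \<in> Gal k"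
  shows "sigM \<sigma> (mA t a b) = mA t (conj_pt \<sigma> a) (conj_pt \<sigma> b)"
  using mA_conj[OF h g gal_fix[OF g tk(1)] gal_fix[OF g tk(2)]] .



lemma part2:
  fixes k L :: "'a::field set"
  assumes k: "is_subfield k" and q: "quadratic_ext k L"
    and r: "rational_point k L r" and s: "rational_point k L s" and ns: "\<not> same_ruling r s"
  shows "\<exists>\<alpha>. aut_QL k L \<alpha> \<and> \<alpha> r = (proj_pt (1, 0), proj_pt (1, 0)) \<and>
           \<alpha> s = (proj_pt (0, 1), proj_pt (0, 1))"
proof -
  define x where "x = fst r"
  define x' where "x' = snd r"
  define y where "y = fst s"
  define y' where "y' = snd s"
  have P: "x \<in> P1" "x' \<in> P1" "y \<in> P1" "y' \<in> P1"
    using r s unfolding rational_point_def QP_def x_def x'_def y_def y'_def by auto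
  have ne: "x \<noteq> y" "x' \<noteq> y'" using ns unfolding same_ruling_def x_def x'_def y_def y'_def by auto
  have rtr: "conj_pt \<sigma> x = x \<and> conj_pt \<sigma> x' = x' \<and> conj_pt \<sigma> y = y \<and> conj_pt \<sigma> y' = y'"
    if "\<sigma> \<in> Gal k" "\<forall>a\<in>L. \<sigma> a = a" for \<sigma>
  proof -
    have "tw_act L \<sigma> r = r" "tw_act L \<sigma> s = s" using r s that unfolding rational_point_def by auto
    then show ?thesis using tw_triv[OF that(2)] unfolding x_def x'_def y_def y'_def
      by (metis fst_conv snd_conv)
  qed
  have rnt: "conj_pt \<sigma> x = x' \<and> conj_pt \<sigma> x' = x \<and> conj_pt \<sigma> y = y' \<and> conj_pt \<sigma> y' = y"
    if "\<sigma> \<in> Gal k" "\<not> (\<forall>a\<in>L. \<sigma> a = a)" for \<sigma>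
  proof -
    have "tw_act L \<sigma> r = r" "tw_act L \<sigma> s = s" using r s that unfolding rational_point_def by auto
    then show ?thesis using tw_nontriv[OF that(2)] unfolding x_def x'_def y_def y'_def
      by (metis fst_conv snd_conv)
  qed
  obtain t where t: "fst t \<in> k" "snd t \<in> k" "t \<noteq> (0,0)" "proj_pt t \<noteq> x" "proj_pt t \<noteq> y"
    using pick_t[OF k P(1) P(3)] by blast
  have fixt: "\<sigma> (fst t) = fst t" "\<sigma> (snd t) = snd t" if "\<sigma> \<in> Gal k" for \<sigma>
    using gal_fix[OF that] t by auto
  show ?thesis
  proof (cases "\<exists>\<sigma>0\<in>Gal k. \<not> (\<forall>a\<in>L. \<sigma>0 a = a)")
    case True
    then obtain \<sigma>0 where s0: "\<sigma>0 \<in> Gal k" "\<not> (\<forall>a\<in>L. \<sigma>0 a = a)" by blast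
    have t': "proj_pt t \<noteq> x'" "proj_pt t \<noteq> y'"
    proof -
      show "proj_pt t \<noteq> x'"
      proof
        assume "proj_pt t = x'"
        then have "x = proj_pt t" using rnt[OF s0] conj_fix_t[OF s0(1) t(1,2)] by metis
        then show False using t(4) by simp
      qed
      show "proj_pt t \<noteq> y'"
      proof
        assume "proj_pt t = y'"
        then have "y = proj_pt t" using rnt[OF s0] conj_fix_t[OF s0(1) t(1,2)] by metis
        then show False using t(5) by simp
      qed
    qed
    define A where "A = mA t x y"
    define B where "B = mA t x' y'"
    have hA: "x \<in> P1" "y \<in> P1" "x \<noteq> y" "t \<noteq> (0,0)" "proj_pt t \<noteq> x" "proj_pt t \<noteq> y"
      using P ne t by auto
    have hB: "x' \<in> P1" "y' \<in> P1" "x' \<noteq> y'" "t \<noteq> (0,0)" "proj_pt t \<noteq> x'" "proj_pt t \<noteq> y'"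
      using P ne t t' by auto
    have "aut_QL k L (\<lambda>z. (mat_act A (fst z), mat_act B (snd z)))"
    proof (rule AUT)
      show "invertible2 A" "invertible2 B" unfolding A_def B_def using mA_props(1)[OF hA] mA_props(1)[OF hB] by auto
      show "\<forall>\<sigma>\<in>Gal k. (\<forall>a\<in>L. \<sigma> a = a) \<longrightarrow> sigM \<sigma> A = A \<and> sigM \<sigma> B = B"
      proof (intro ballI impI)
        fix \<sigma> assume g: "\<sigma> \<in> Gal k" and tr: "\<forall>a\<in>L. \<sigma> a = a"
        show "sigM \<sigma> A = A \<and> sigM \<sigma> B = B"
          unfolding A_def B_def mA_conjk[OF hA t(1,2) g] mA_conjk[OF hB t(1,2) g] using rtr[OF g tr] by simp
      qed
      show "\<forall>\<sigma>\<in>Gal k. \<not> (\<forall>a\<in>L. \<sigma> a = a) \<longrightarrow> sigM \<sigma> A = B \<and> sigM \<sigma> B = A"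
      proof (intro ballI impI)
        fix \<sigma> assume g: "\<sigma> \<in> Gal k" and nt: "\<not> (\<forall>a\<in>L. \<sigma> a = a)"
        show "sigM \<sigma> A = B \<and> sigM \<sigma> B = A"
          unfolding A_def B_def mA_conjk[OF hA t(1,2) g] mA_conjk[OF hB t(1,2) g] using rnt[OF g nt] by simp
      qed
    qed
    moreover have "mat_act A (fst r) = proj_pt (1,0)" "mat_act B (snd r) = proj_pt (1,0)"
      "mat_act A (fst s) = proj_pt (0,1)" "mat_act B (snd s) = proj_pt (0,1)"
      unfolding A_def B_def using mA_props(2,3)[OF hA] mA_props(2,3)[OF hB] x_def x'_def y_def y'_def by auto
    ultimately show ?thesis by auto
  next
    case False
    obtain t2 where t2: "fst t2 \<in> k" "snd t2 \<in> k" "t2 \<noteq> (0,0)" "proj_pt t2 \<noteq> x'" "proj_pt t2 \<noteq> y'"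
      using pick_t[OF k P(2) P(4)] by blast
    have fixt2: "\<sigma> (fst t2) = fst t2" "\<sigma> (snd t2) = snd t2" if "\<sigma> \<in> Gal k" for \<sigma>
      using gal_fix[OF that] t2 by auto
    define A where "A = mA t x y"
    define B where "B = mA t2 x' y'"
    have hA: "x \<in> P1" "y \<in> P1" "x \<noteq> y" "t \<noteq> (0,0)" "proj_pt t \<noteq> x" "proj_pt t \<noteq> y"
      using P ne t by auto
    have hB: "x' \<in> P1" "y' \<in> P1" "x' \<noteq> y'" "t2 \<noteq> (0,0)" "proj_pt t2 \<noteq> x'" "proj_pt t2 \<noteq> y'"
      using P ne t2 by auto
    have "aut_QL k L (\<lambda>z. (mat_act A (fst z), mat_act B (snd z)))"
    proof (rule AUT)
      show "invertible2 A" "invertible2 B" unfolding A_def B_def using mA_props(1)[OF hA] mA_props(1)[OF hB] by auto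
      show "\<forall>\<sigma>\<in>Gal k. (\<forall>a\<in>L. \<sigma> a = a) \<longrightarrow> sigM \<sigma> A = A \<and> sigM \<sigma> B = B"
      proof (intro ballI impI)
        fix \<sigma> assume g: "\<sigma> \<in> Gal k" and tr: "\<forall>a\<in>L. \<sigma> a = a"
        show "sigM \<sigma> A = A \<and> sigM \<sigma> B = B"
          unfolding A_def B_def mA_conjk[OF hA t(1,2) g] mA_conjk[OF hB t2(1,2) g] using rtr[OF g tr] by simp
      qed
      show "\<forall>\<sigma>\<in>Gal k. \<not> (\<forall>a\<in>L. \<sigma> a = a) \<longrightarrow> sigM \<sigma> A = B \<and> sigM \<sigma> B = A"
        using False by blast
    qed
    moreover have "mat_act A (fst r) = proj_pt (1,0)" "mat_act B (snd r) = proj_pt (1,0)"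
      "mat_act A (fst s) = proj_pt (0,1)" "mat_act B (snd s) = proj_pt (0,1)"
      unfolding A_def B_def using mA_props(2,3)[OF hA] mA_props(2,3)[OF hB] x_def x'_def y_def y'_def by auto
    ultimately show ?thesis by auto
  qed
qed



lemma part1:
  fixes k L :: "'a::field set"
  assumes k: "is_subfield k" and q: "quadratic_ext k L"
    and cp: "closed_point_deg k L p 2" and nr: "\<forall>z\<in>p. \<forall>w\<in>p. z \<noteq> w \<longrightarrow> \<not> same_ruling z w"
    and sp: "splitting_field k L p L"
  shows "\<exists>\<alpha>. aut_QL k L \<alpha> \<and>
           \<alpha> ` p = {(proj_pt (1, 0), proj_pt (0, 1)), (proj_pt (0, 1), proj_pt (1, 0))}"
proof -
  obtain z where zQ: "z \<in> QP" and pz: "p = {tw_act L \<sigma> z | \<sigma>. \<sigma> \<in> Gal k}" and c2: "card p = 2"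
    using cp unfolding closed_point_deg_def by blast
  have def: "conj_pt \<sigma> (fst u) = fst u \<and> conj_pt \<sigma> (snd u) = snd u" if "u \<in> p" "\<sigma> \<in> Gal L" for u \<sigma>
  proof -
    have "tw_act L \<sigma> u = u" using sp that unfolding splitting_field_def defined_over_def by blast
    moreover have "\<forall>a\<in>L. \<sigma> a = a" using gal_fix[OF that(2)] by blast
    ultimately show ?thesis using tw_triv[of L \<sigma> u] by (metis fst_conv snd_conv)
  qed
  have "tw_act L id z = z" using tw_triv[of L id z] by (simp add: conj_id)
  then have zp: "z \<in> p" unfolding pz using gal_id by force
  have fp: "finite p" using c2 card.infinite by fastforce
  obtain w where wp: "w \<in> p" and wz: "w \<noteq> z"
  proof (rule ccontr)
    assume "\<not> thesis"
    then have "\<forall>w\<in>p. w = z" using that by blast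
    then have "p \<subseteq> {z}" by blast
    then have "card p \<le> 1" using card_mono[of "{z}" p] by simp
    then show False using c2 by simp
  qed
  have p2: "p = {z, w}"
  proof -
    have "{z, w} \<subseteq> p" using zp wp by simp
    moreover have "card {z, w} = card p" using c2 wz by simp
    ultimately show ?thesis using card_subset_eq[OF fp] by metis
  qed
  obtain \<tau> where ta: "\<tau> \<in> Gal k" and wt: "w = tw_act L \<tau> z" using wp unfolding pz by blast
  have tnt: "\<not> (\<forall>a\<in>L. \<tau> a = a)"
  proof
    assume tr: "\<forall>a\<in>L. \<tau> a = a"
    then have "\<tau> \<in> Gal L" using gal_triv[OF ta] by blast
    then have "w = z" using wt tw_triv[OF tr, of z] def[OF zp] by (metis prod.collapse)
    then show False using wz by simp
  qed
  define x where "x = fst z"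
  define y where "y = snd z"
  define x2 where "x2 = conj_pt \<tau> y"
  define y2 where "y2 = conj_pt \<tau> x"
  have w2: "w = (x2, y2)" unfolding wt tw_nontriv[OF tnt] x2_def y2_def x_def y_def by simp
  have P: "x \<in> P1" "y \<in> P1" "x2 \<in> P1" "y2 \<in> P1"
    using zQ conj_P1[OF ta] unfolding QP_def x_def y_def x2_def y2_def by auto
  have "\<not> same_ruling z w" using nr zp wp wz by metis
  then have ne: "x \<noteq> x2" "y \<noteq> y2" unfolding same_ruling_def w2 x_def y_def by auto
  have dz: "conj_pt \<sigma> x = x" "conj_pt \<sigma> y = y" if "\<sigma> \<in> Gal L" for \<sigma>
    using def[OF zp that] unfolding x_def y_def by auto
  have dw: "conj_pt \<sigma> x2 = x2" "conj_pt \<sigma> y2 = y2" if "\<sigma> \<in> Gal L" for \<sigma>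
    using def[OF wp that] unfolding w2 by auto
  have ntf: "conj_pt \<sigma> x = y2 \<and> conj_pt \<sigma> y = x2 \<and> conj_pt \<sigma> x2 = y \<and> conj_pt \<sigma> y2 = x"
    if g: "\<sigma> \<in> Gal k" and nt: "\<not> (\<forall>a\<in>L. \<sigma> a = a)" for \<sigma>
  proof -
    have st: "\<sigma> \<circ> \<tau> \<in> Gal L" using gal_comp[OF g ta INV[OF k q g nt ta tnt]] .
    have tt: "\<tau> \<circ> \<tau> \<in> Gal L" using gal_comp[OF ta ta INV[OF k q ta tnt ta tnt]] .
    have a1: "conj_pt \<sigma> y2 = x" unfolding y2_def conj_comp using dz(1)[OF st] .
    have a2: "conj_pt \<sigma> x2 = y" unfolding x2_def conj_comp using dz(2)[OF st] .
    have "x = conj_pt \<tau> y2" unfolding y2_def conj_comp using dz(1)[OF tt] by simp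
    then have a3: "conj_pt \<sigma> x = y2" using dw(2)[OF st] by (simp add: conj_comp)
    have "y = conj_pt \<tau> x2" unfolding x2_def conj_comp using dz(2)[OF tt] by simp
    then have a4: "conj_pt \<sigma> y = x2" using dw(1)[OF st] by (simp add: conj_comp)
    show ?thesis using a1 a2 a3 a4 by simp
  qed
  have trf: "conj_pt \<sigma> x = x \<and> conj_pt \<sigma> y = y \<and> conj_pt \<sigma> x2 = x2 \<and> conj_pt \<sigma> y2 = y2"
    if g: "\<sigma> \<in> Gal k" and tr: "\<forall>a\<in>L. \<sigma> a = a" for \<sigma>
    using dz[OF gal_triv[OF g tr]] dw[OF gal_triv[OF g tr]] by simp
  obtain t where t: "fst t \<in> k" "snd t \<in> k" "t \<noteq> (0,0)" "proj_pt t \<noteq> x" "proj_pt t \<noteq> x2"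
    using pick_t[OF k P(1) P(3)] by blast
  have t': "proj_pt t \<noteq> y2" "proj_pt t \<noteq> y"
  proof -
    show "proj_pt t \<noteq> y2"
    proof
      assume "proj_pt t = y2"
      then have "x = proj_pt t" using ntf[OF ta tnt] conj_fix_t[OF ta t(1,2)] by metis
      then show False using t(4) by simp
    qed
    show "proj_pt t \<noteq> y"
    proof
      assume "proj_pt t = y"
      then have "x2 = proj_pt t" using ntf[OF ta tnt] conj_fix_t[OF ta t(1,2)] by metis
      then show False using t(5) by simp
    qed
  qed
  define A where "A = mA t x x2"
  define B where "B = mA t y2 y"
  have hA: "x \<in> P1" "x2 \<in> P1" "x \<noteq> x2" "t \<noteq> (0,0)" "proj_pt t \<noteq> x" "proj_pt t \<noteq> x2"
    using P ne t by auto
  have hB: "y2 \<in> P1" "y \<in> P1" "y2 \<noteq> y" "t \<noteq> (0,0)" "proj_pt t \<noteq> y2" "proj_pt t \<noteq> y"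
    using P ne t t' by auto
  have "aut_QL k L (\<lambda>z. (mat_act A (fst z), mat_act B (snd z)))"
  proof (rule AUT)
    show "invertible2 A" "invertible2 B" unfolding A_def B_def using mA_props(1)[OF hA] mA_props(1)[OF hB] by auto
    show "\<forall>\<sigma>\<in>Gal k. (\<forall>a\<in>L. \<sigma> a = a) \<longrightarrow> sigM \<sigma> A = A \<and> sigM \<sigma> B = B"
    proof (intro ballI impI)
      fix \<sigma> assume g: "\<sigma> \<in> Gal k" and tr: "\<forall>a\<in>L. \<sigma> a = a"
      show "sigM \<sigma> A = A \<and> sigM \<sigma> B = B"
        unfolding A_def B_def mA_conjk[OF hA t(1,2) g] mA_conjk[OF hB t(1,2) g] using trf[OF g tr] by simp
    qed
    show "\<forall>\<sigma>\<in>Gal k. \<not> (\<forall>a\<in>L. \<sigma> a = a) \<longrightarrow> sigM \<sigma> A = B \<and> sigM \<sigma> B = A"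
    proof (intro ballI impI)
      fix \<sigma> assume g: "\<sigma> \<in> Gal k" and nt: "\<not> (\<forall>a\<in>L. \<sigma> a = a)"
      show "sigM \<sigma> A = B \<and> sigM \<sigma> B = A"
        unfolding A_def B_def mA_conjk[OF hA t(1,2) g] mA_conjk[OF hB t(1,2) g] using ntf[OF g nt] by simp
    qed
  qed
  moreover have "mat_act A x = proj_pt (1,0)" "mat_act A x2 = proj_pt (0,1)"
    "mat_act B y2 = proj_pt (1,0)" "mat_act B y = proj_pt (0,1)"
    unfolding A_def B_def using mA_props(2,3)[OF hA] mA_props(2,3)[OF hB] by auto
  moreover have "z = (x, y)" unfolding x_def y_def by simp
  ultimately show ?thesis unfolding p2 w2 by (intro exI[of _ "\<lambda>z. (mat_act A (fst z), mat_act B (snd z))"]) auto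
qed


theorem lemma3p6:
  fixes k L :: "'a::field set"
  assumes "alg_closed_field TYPE('a)"
    and "is_subfield k"
    and "algebraic_over k"
    and "perfect_subfield k"
    and "quadratic_ext k L"
  shows
    "(\<forall>p. closed_point_deg k L p 2 \<and> (\<forall>z\<in>p. \<forall>w\<in>p. z \<noteq> w \<longrightarrow> \<not> same_ruling z w)
        \<and> splitting_field k L p L \<longrightarrow>
        (\<exists>\<alpha>. aut_QL k L \<alpha> \<and>
           \<alpha> ` p = {(proj_pt (1, 0), proj_pt (0, 1)), (proj_pt (0, 1), proj_pt (1, 0))}))
     \<and>
     (\<forall>r s. rational_point k L r \<and> rational_point k L s \<and> \<not> same_ruling r s \<longrightarrow>
        (\<exists>\<alpha>. aut_QL k L \<alpha> \<and> \<alpha> r = (proj_pt (1, 0), proj_pt (1, 0)) \<and>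
           \<alpha> s = (proj_pt (0, 1), proj_pt (0, 1))))"
proof (intro conjI allI impI)
  fix p assume h: "closed_point_deg k L p 2 \<and> (\<forall>z\<in>p. \<forall>w\<in>p. z \<noteq> w \<longrightarrow> \<not> same_ruling z w)
        \<and> splitting_field k L p L"
  then have "closed_point_deg k L p 2" "\<forall>z\<in>p. \<forall>w\<in>p. z \<noteq> w \<longrightarrow> \<not> same_ruling z w"
    "splitting_field k L p L" by simp_all
  then show "\<exists>\<alpha>. aut_QL k L \<alpha> \<and>
           \<alpha> ` p = {(proj_pt (1, 0), proj_pt (0, 1)), (proj_pt (0, 1), proj_pt (1, 0))}"
    by (rule part1[OF assms(2) assms(5)])
next
  fix r s assume h: "rational_point k L r \<and> rational_point k L s \<and> \<not> same_ruling r s"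
  then have "rational_point k L r" "rational_point k L s" "\<not> same_ruling r s" by simp_all
  then show "\<exists>\<alpha>. aut_QL k L \<alpha> \<and> \<alpha> r = (proj_pt (1, 0), proj_pt (1, 0)) \<and>
           \<alpha> s = (proj_pt (0, 1), proj_pt (0, 1))"
    by (rule part2[OF assms(2) assms(5)])
qed

end
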